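(* The function $\psi:\mathcal{P}_M\times\Theta^M\to[0,\infty]$ defined by $$\psi(\boldsymbol{w},\boldsymbol{\theta}) := \inf_{\boldsymbol{\lambda}\in\mathrm{Alt}(\boldsymbol{\theta})}\ \sum_{m=1}^M w_m\, D^{(m)}_{\mathrm{KL}}(\boldsymbol{\theta}_m,\boldsymbol{\lambda}_m)$$ is continuous on $\mathcal{P}_M\times\Theta^M$.
   Context: $M$ arms, $K$ clusters with $1<K<M$, $\Theta\subset\mathbb{R}^d$ compact. For each arm $m$, a parametric family $\{P_m(\cdot\mid\boldsymbol{\rho}):\boldsymbol{\rho}\in\Theta\}$ with $D^{(m)}_{\mathrm{KL}}(\boldsymbol{\rho}_1,\boldsymbol{\rho}_2)=\mathbb{E}_{X\sim P_m(\cdot\mid\boldsymbol{\rho}_1)}\big[\log\frac{P_m(X\mid\boldsymbol{\rho}_1)}{P_m(X\mid\boldsymbol{\rho}_2)}\big]$, assumed finite and uniformly continuous in $(\boldsymbol{\rho}_1,\boldsymbol{\rho}_2)\in\Theta\times\Theta$ for each $m$. $\mathcal{P}_M=\{\boldsymbol{w}\in\mathbb{R}_+^M:\sum_m w_m=1\}$. For $\boldsymbol{\theta}\in\Theta^M$, $\mathcal{C}(\boldsymbol{\theta})\in[K]^M$ is the cluster index vector obtained by single-linkage clustering of the points $\boldsymbol{\theta}_1,\dots,\boldsymbol{\theta}_M$ (start from singletons, repeatedly merge the two clusters at smallest minimum pairwise Euclidean distance, ties broken by a fixed rule, until $K$ clusters remain). $\boldsymbol{c}\sim\boldsymbol{c}'$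 iff $\boldsymbol{c}=\sigma(\boldsymbol{c}')$ for a permutation $\sigma$ of $[K]$. $\mathrm{Alt}(\boldsymbol{\theta})=\{\boldsymbol{\lambda}\in\Theta^M:\mathcal{C}(\boldsymbol{\lambda})\nsim\mathcal{C}(\boldsymbol{\theta})\}$. *)

theory Defs
  imports "HOL-Probability.Probability" "HOL-Combinatorics.Permutations"
begin

(* KL divergence D^(m)(rho1, rho2) = E_{X ~ P_m(.|rho1)} [ log (dP_m(.|rho1) / dP_m(.|rho2)) ],
   natural logarithm.  In the library, KL_divergence b M N integrates log_b (dN/dM) w.r.t. N. *)
definition KLdiv :: "('m \<Rightarrow> 'a \<Rightarrow> 'x measure) \<Rightarrow> 'm \<Rightarrow> 'a \<Rightarrow> 'a \<Rightarrow> real" where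
  "KLdiv P m r1 r2 = KL_divergence (exp 1) (P m r2) (P m r1)"

definition prob_simplex :: "('m::finite \<Rightarrow> real) set" where
  "prob_simplex = {w. (\<forall>m. 0 \<le> w m) \<and> (\<Sum>m\<in>UNIV. w m) = 1}"

definition linkage :: "('m \<Rightarrow> 'a::euclidean_space) \<Rightarrow> 'm set \<Rightarrow> 'm set \<Rightarrow> real" where
  "linkage \<theta> A B = Min {dist (\<theta> i) (\<theta> j) | i j. i \<in> A \<and> j \<in> B}"

definition merge_step ::
  "(('m set \<times> 'm set) set \<Rightarrow> 'm set \<times> 'm set) \<Rightarrow> ('m \<Rightarrow> 'a::euclidean_space) \<Rightarrow> 'm set set \<Rightarrow> 'm set set" where
  "merge_step tb \<theta> Cs =
     (let cands = {(A, B). A \<in> Cs \<and> B \<in> Cs \<and> A \<noteq> B};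
          d = Min ((\<lambda>(A, B). linkage \<theta> A B) ` cands);
          ties = {(A, B) \<in> cands. linkage \<theta> A B = d};
          (A, B) = tb ties
      in insert (A \<union> B) (Cs - {A, B}))"

definition single_linkage ::
  "(('m set \<times> 'm set) set \<Rightarrow> 'm set \<times> 'm set) \<Rightarrow> nat \<Rightarrow> ('m::finite \<Rightarrow> 'a::euclidean_space) \<Rightarrow> 'm set set" where
  "single_linkage tb K \<theta> = (merge_step tb \<theta> ^^ (CARD('m) - K)) {{i} | i. True}"

definition cluster_index ::
  "(('m set \<times> 'm set) set \<Rightarrow> 'm set \<times> 'm set) \<Rightarrow> nat \<Rightarrow> ('m::finite \<Rightarrow> 'a::euclidean_space) \<Rightarrow> ('m \<Rightarrow> nat)" where
  "cluster_index tb K \<theta> = (SOME c. (\<forall>i. c i \<in> {1..K}) \<and>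
      (\<forall>i j. c i = c j \<longleftrightarrow> (\<exists>A\<in>single_linkage tb K \<theta>. i \<in> A \<and> j \<in> A)))"

definition label_equiv :: "nat \<Rightarrow> ('m \<Rightarrow> nat) \<Rightarrow> ('m \<Rightarrow> nat) \<Rightarrow> bool" where
  "label_equiv K c c' \<longleftrightarrow> (\<exists>\<sigma>. \<sigma> permutes {1..K} \<and> c = \<sigma> \<circ> c')"

definition Alt ::
  "(('m set \<times> 'm set) set \<Rightarrow> 'm set \<times> 'm set) \<Rightarrow> nat \<Rightarrow> 'a::euclidean_space set \<Rightarrow> ('m::finite \<Rightarrow> 'a) \<Rightarrow> ('m \<Rightarrow> 'a) set" where
  "Alt tb K \<Theta> \<theta> = {lam. (\<forall>m. lam m \<in> \<Theta>) \<and>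
      \<not> label_equiv K (cluster_index tb K lam) (cluster_index tb K \<theta>)}"

definition psi ::
  "('m \<Rightarrow> 'a \<Rightarrow> 'x measure) \<Rightarrow> (('m set \<times> 'm set) set \<Rightarrow> 'm set \<times> 'm set) \<Rightarrow> nat \<Rightarrow> 'a::euclidean_space set
     \<Rightarrow> ('m::finite \<Rightarrow> real) \<Rightarrow> ('m \<Rightarrow> 'a) \<Rightarrow> ereal" where
  "psi P tb K \<Theta> w \<theta> = (INF lam\<in>Alt tb K \<Theta> \<theta>. ereal (\<Sum>m\<in>UNIV. w m * KLdiv P m (\<theta> m) (lam m)))"

end

theory Submission
  imports Defs
begin

lemma (in information_space) KL_nonneg_ac:
  assumes "prob_space N"
  assumes ac: "absolutely_continuous M N" "sets N = sets M"
  assumes int: "integrable N (entropy_density b M N)"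
  shows "0 \<le> KL_divergence b M N"
proof -
  interpret N: prob_space N by fact
  have "finite_measure N" by unfold_locales
  from real_RN_deriv[OF this ac] obtain D
    where D:
      "random_variable borel D"
      "AE x in M. RN_deriv M N x = ennreal (D x)"
      "AE x in N. 0 < D x"
      "\<And>x. 0 \<le> D x"
    by this auto
  have "N = density M (RN_deriv M N)"
    using ac by (rule density_RN_deriv[symmetric])
  also have "\<dots> = density M D"
    using D by (auto intro!: density_cong)
  finally have N: "N = density M D" .
  from absolutely_continuous_AE[OF ac(2,1) D(2)] D b_gt_1 ac measurable_entropy_density
  have "integrable N (\<lambda>x. log b (D x))"
    by (intro integrable_cong_AE[THEN iffD2, OF _ _ _ int])
       (auto simp: N entropy_density_def)
  with D b_gt_1 have "integrable M (\<lambda>x. D x * log b (D x))"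
    by (subst integrable_real_density[symmetric]) (auto simp: N[symmetric] comp_def)
  with \<open>prob_space N\<close> D show ?thesis
    unfolding N
    by (intro KL_nonneg) auto
qed

lemma KLdiv_nonneg:
  assumes "prob_space (P m r1)" "prob_space (P m r2)" "sets (P m r1) = sets (P m r2)"
    "absolutely_continuous (P m r2) (P m r1)"
    "integrable (P m r1) (entropy_density (exp 1) (P m r2) (P m r1))"
  shows "0 \<le> KLdiv P m r1 r2"
proof -
  interpret prob_space "P m r2" by fact
  interpret information_space "P m r2" "exp 1" by unfold_locales simp
  show ?thesis unfolding KLdiv_def by (rule KL_nonneg_ac) (use assms in auto)
qed

lemma KLdiv_self:
  assumes "prob_space (P m r)"
  shows "KLdiv P m r r = 0"
proof -
  interpret prob_space "P m r" by fact
  show ?thesis unfolding KLdiv_def by (rule KL_same_eq_0)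
qed

lemma label_equiv_refl: "label_equiv K c c"
  unfolding label_equiv_def by (intro exI[of _ id]) (auto simp: permutes_id)

lemma label_equiv_sym: "label_equiv K c c' \<Longrightarrow> label_equiv K c' c"
  unfolding label_equiv_def
proof (elim exE conjE)
  fix \<sigma> assume s: "\<sigma> permutes {1..K}" "c = \<sigma> \<circ> c'"
  show "\<exists>\<sigma>. \<sigma> permutes {1..K} \<and> c' = \<sigma> \<circ> c"
  proof (intro exI[of _ "inv \<sigma>"] conjI)
    show "inv \<sigma> permutes {1..K}" using s(1) by (rule permutes_inv)
    have "inv \<sigma> \<circ> \<sigma> = id" using s(1) by (rule permutes_inv_o(2))
    then show "c' = inv \<sigma> \<circ> c" unfolding s(2) by (metis comp_id id_comp o_assoc)
  qed
qed

lemma label_equiv_trans: "label_equiv K c c' \<Longrightarrow> label_equiv K c' c'' \<Longrightarrow> label_equiv K c c''"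
  unfolding label_equiv_def
  by (metis permutes_compose o_assoc)

lemma open_box: "open {x::('m::finite \<Rightarrow> real) \<times> ('m \<Rightarrow> 'a::euclidean_space). \<forall>m. \<bar>fst x m - w0 m\<bar> < d \<and> dist (snd x m) (t0 m) < d}"
proof -
  have "{x::('m::finite \<Rightarrow> real) \<times> ('m \<Rightarrow> 'a::euclidean_space). \<forall>m. \<bar>fst x m - w0 m\<bar> < d \<and> dist (snd x m) (t0 m) < d}
     = (\<Inter>m\<in>UNIV. {x. \<bar>fst x m - w0 m\<bar> < d} \<inter> {x. dist (snd x m) (t0 m) < d})" by auto
  also have "open \<dots>"
  proof (intro open_INT finite_UNIV ballI open_Int open_Collect_less)
    fix m
    have c1: "continuous_on UNIV (\<lambda>x::('m::finite \<Rightarrow> real) \<times> ('m \<Rightarrow> 'a). fst x m)"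
      by (rule continuous_on_compose2[OF continuous_on_product_coordinates continuous_on_fst]) auto
    have c2: "continuous_on UNIV (\<lambda>x::('m::finite \<Rightarrow> real) \<times> ('m \<Rightarrow> 'a). snd x m)"
      by (rule continuous_on_compose2[OF continuous_on_product_coordinates continuous_on_snd]) auto
    show "continuous_on UNIV (\<lambda>x::('m::finite \<Rightarrow> real) \<times> ('m \<Rightarrow> 'a). \<bar>fst x m - w0 m\<bar>)"
      by (intro continuous_on_rabs continuous_on_diff c1 continuous_on_const)
    show "continuous_on UNIV (\<lambda>x::('m::finite \<Rightarrow> real) \<times> ('m \<Rightarrow> 'a). dist (snd x m) (t0 m))"
      by (intro continuous_on_dist c2 continuous_on_const)
  qed (auto intro: continuous_on_const)
  finally show ?thesis .
qed

lemma Inf_close: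
  fixes g h :: "'b \<Rightarrow> real"
  assumes ne: "X \<noteq> {}" and g0: "\<And>x. x\<in>X \<Longrightarrow> 0 \<le> g x" and h0: "\<And>x. x\<in>X \<Longrightarrow> 0 \<le> h x"
    and c: "\<And>x. x\<in>X \<Longrightarrow> \<bar>g x - h x\<bar> \<le> c"
  shows "\<bar>Inf (g`X) - Inf (h`X)\<bar> \<le> c"
proof -
  have bg: "bdd_below (g`X)" using g0 by (rule bdd_belowI2)
  have bh: "bdd_below (h`X)" using h0 by (rule bdd_belowI2)
  have 1: "Inf (g`X) - c \<le> Inf (h`X)"
  proof (rule cINF_greatest[OF ne])
    fix x assume x: "x\<in>X"
    then have "Inf (g`X) \<le> g x" by (rule cINF_lower[OF bg])
    then show "Inf (g`X) - c \<le> h x" using c[OF x] by linarith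
  qed
  have 2: "Inf (h`X) - c \<le> Inf (g`X)"
  proof (rule cINF_greatest[OF ne])
    fix x assume x: "x\<in>X"
    then have "Inf (h`X) \<le> h x" by (rule cINF_lower[OF bh])
    then show "Inf (h`X) - c \<le> g x" using c[OF x] by linarith
  qed
  from 1 2 show ?thesis by linarith
qed

theorem lemma1:
  fixes P :: "'m::finite \<Rightarrow> 'a::euclidean_space \<Rightarrow> 'x measure"
    and \<Theta> :: "'a set" and K :: nat
    and tb :: "('m set \<times> 'm set) set \<Rightarrow> 'm set \<times> 'm set"
  assumes K: "1 < K" "K < CARD('m)"
    and cpt: "compact \<Theta>"
    and tb: "\<And>S. S \<noteq> {} \<Longrightarrow> tb S \<in> S"
    and prob: "\<And>m r. r \<in> \<Theta> \<Longrightarrow> prob_space (P m r)"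
    and same_space: "\<And>m r1 r2. r1 \<in> \<Theta> \<Longrightarrow> r2 \<in> \<Theta> \<Longrightarrow> sets (P m r1) = sets (P m r2)"
    and ac: "\<And>m r1 r2. r1 \<in> \<Theta> \<Longrightarrow> r2 \<in> \<Theta> \<Longrightarrow> absolutely_continuous (P m r2) (P m r1)"
    and finite_KL: "\<And>m r1 r2. r1 \<in> \<Theta> \<Longrightarrow> r2 \<in> \<Theta> \<Longrightarrow>
                      integrable (P m r1) (entropy_density (exp 1) (P m r2) (P m r1))"
    and unif: "\<And>m. uniformly_continuous_on (\<Theta> \<times> \<Theta>) (\<lambda>(r1, r2). KLdiv P m r1 r2)"
  shows "continuous_on (prob_simplex \<times> {\<theta>. \<forall>m. \<theta> m \<in> \<Theta>}) (\<lambda>(w, \<theta>). psi P tb K \<Theta> w \<theta>)"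
proof -
  define T where "T = {\<theta>::'m\<Rightarrow>'a. \<forall>m. \<theta> m \<in> \<Theta>}"
  define S where "S = (prob_simplex::('m\<Rightarrow>real) set) \<times> T"
  define f where "f = (\<lambda>(w::'m\<Rightarrow>real) (\<theta>::'m\<Rightarrow>'a) (lam::'m\<Rightarrow>'a). \<Sum>m\<in>UNIV. w m * KLdiv P m (\<theta> m) (lam m))"
  define A where "A = Alt tb K \<Theta>"
  define ci where "ci = (cluster_index tb K :: ('m \<Rightarrow> 'a) \<Rightarrow> 'm \<Rightarrow> nat)"
  have KL0: "KLdiv P m r r = 0" if "r\<in>\<Theta>" for m r using KLdiv_self[of P m r, OF prob[OF that]] .
  have KLnn: "0 \<le> KLdiv P m a b" if "a\<in>\<Theta>" "b\<in>\<Theta>" for m a b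
    by (rule KLdiv_nonneg[of P m a b, OF prob[OF that(1)] prob[OF that(2)] same_space[OF that] ac[OF that] finite_KL[OF that]])
  have AT: "lam \<in> T" if "lam \<in> A \<theta>" for \<theta> lam using that by (simp add: A_def Alt_def T_def)
  have wnn: "\<And>w m. w \<in> prob_simplex \<Longrightarrow> 0 \<le> w m" by (auto simp: prob_simplex_def)
  have wsum: "\<And>w. w \<in> prob_simplex \<Longrightarrow> (\<Sum>m\<in>UNIV. w m) = 1" by (auto simp: prob_simplex_def)
  have fnn: "0 \<le> f w \<theta> lam" if "w \<in> prob_simplex" "\<theta> \<in> T" "lam \<in> T" for w \<theta> lam
    unfolding f_def using that by (intro sum_nonneg mult_nonneg_nonneg wnn[OF that(1)] KLnn) (auto simp: T_def)
  have same: "\<And>\<theta> \<theta>0. label_equiv K (ci \<theta>) (ci \<theta>0) \<Longrightarrow> A \<theta> = A \<theta>0"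
    unfolding A_def Alt_def ci_def using label_equiv_sym label_equiv_trans by blast
  have diff: "\<And>\<theta> \<theta>0. \<theta>\<in>T \<Longrightarrow> \<theta>0\<in>T \<Longrightarrow> \<not> label_equiv K (ci \<theta>) (ci \<theta>0) \<Longrightarrow> \<theta> \<in> A \<theta>0 \<and> \<theta>0 \<in> A \<theta>"
    unfolding A_def Alt_def ci_def T_def using label_equiv_sym by blast
  have psi_eq: "\<And>w \<theta>. psi P tb K \<Theta> w \<theta> = (INF lam\<in>A \<theta>. ereal (f w \<theta> lam))"
    by (simp add: psi_def A_def f_def)

  have "\<forall>m. \<exists>B. \<forall>a\<in>\<Theta>. \<forall>b\<in>\<Theta>. \<bar>KLdiv P m a b\<bar> \<le> B"
  proof
    fix m
    have "continuous_on (\<Theta>\<times>\<Theta>) (\<lambda>(r1,r2). KLdiv P m r1 r2)"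
      using unif[of m] by (rule uniformly_continuous_imp_continuous)
    then have "compact ((\<lambda>(r1,r2). KLdiv P m r1 r2) ` (\<Theta>\<times>\<Theta>))"
      by (intro compact_continuous_image compact_Times cpt)
    then have "bounded ((\<lambda>(r1,r2). KLdiv P m r1 r2) ` (\<Theta>\<times>\<Theta>))" by (rule compact_imp_bounded)
    then obtain B where "\<forall>x\<in>(\<lambda>(r1,r2). KLdiv P m r1 r2) ` (\<Theta>\<times>\<Theta>). norm x \<le> B"
      by (auto simp: bounded_iff)
    then show "\<exists>B. \<forall>a\<in>\<Theta>. \<forall>b\<in>\<Theta>. \<bar>KLdiv P m a b\<bar> \<le> B" by force
  qed
  then obtain Bf where Bf: "\<And>m a b. a\<in>\<Theta> \<Longrightarrow> b\<in>\<Theta> \<Longrightarrow> \<bar>KLdiv P m a b\<bar> \<le> Bf m" by metis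
  define B where "B = (\<Sum>m\<in>UNIV. \<bar>Bf m\<bar>)"
  have B: "\<bar>KLdiv P m a b\<bar> \<le> B" if "a\<in>\<Theta>" "b\<in>\<Theta>" for m a b
  proof -
    have "\<bar>Bf m\<bar> \<le> B" unfolding B_def by (rule member_le_sum) auto
    then show ?thesis using Bf[OF that, of m] by linarith
  qed
  have B0: "0 \<le> B" by (simp add: B_def sum_nonneg)

  have uc: "\<exists>d>0. \<forall>m a a' b b'. a\<in>\<Theta> \<longrightarrow> a'\<in>\<Theta> \<longrightarrow> b\<in>\<Theta> \<longrightarrow> b'\<in>\<Theta> \<longrightarrow> dist a a' < d \<longrightarrow> dist b b' < d
      \<longrightarrow> \<bar>KLdiv P m a b - KLdiv P m a' b'\<bar> < e" if e: "0 < e" for e :: real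
  proof -
    have "\<forall>m. \<exists>d>0. \<forall>a a' b b'. a\<in>\<Theta> \<longrightarrow> a'\<in>\<Theta> \<longrightarrow> b\<in>\<Theta> \<longrightarrow> b'\<in>\<Theta> \<longrightarrow> dist a a' < d \<longrightarrow> dist b b' < d
      \<longrightarrow> \<bar>KLdiv P m a b - KLdiv P m a' b'\<bar> < e"
    proof
      fix m
      from unif[of m, unfolded uniformly_continuous_on_def, rule_format, OF e]
      obtain d where d: "d>0" "\<forall>x\<in>\<Theta>\<times>\<Theta>. \<forall>x'\<in>\<Theta>\<times>\<Theta>. dist x' x < d \<longrightarrow>
          dist ((\<lambda>(r1,r2). KLdiv P m r1 r2) x') ((\<lambda>(r1,r2). KLdiv P m r1 r2) x) < e" by blast
      show "\<exists>d>0. \<forall>a a' b b'. a\<in>\<Theta> \<longrightarrow> a'\<in>\<Theta> \<longrightarrow> b\<in>\<Theta> \<longrightarrow> b'\<in>\<Theta> \<longrightarrow> dist a a' < d \<longrightarrow> dist b b' < d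
      \<longrightarrow> \<bar>KLdiv P m a b - KLdiv P m a' b'\<bar> < e"
      proof (intro exI[of _ "d/2"] conjI allI impI)
        show "0 < d/2" using d by simp
        fix a a' b b' assume h: "a\<in>\<Theta>" "a'\<in>\<Theta>" "b\<in>\<Theta>" "b'\<in>\<Theta>" "dist a a' < d/2" "dist b b' < d/2"
        have "dist (a,b) (a',b') \<le> dist a a' + dist b b'" unfolding dist_Pair_Pair
          by (rule sqrt_sum_squares_le_sum) auto
        then have "dist (a,b) (a',b') < d" using h by linarith
        then have "dist (KLdiv P m a b) (KLdiv P m a' b') < e" using d(2) h by auto
        then show "\<bar>KLdiv P m a b - KLdiv P m a' b'\<bar> < e" by (simp add: dist_real_def)
      qed
    qed
    then obtain dm where dm: "\<And>m. dm m > 0" and dmP: "\<And>m. \<forall>a a' b b'. a\<in>\<Theta> \<longrightarrow> a'\<in>\<Theta> \<longrightarrow> b\<in>\<Theta> \<longrightarrow> b'\<in>\<Theta> \<longrightarrow> dist a a' < dm m \<longrightarrow> dist b b' < dm m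
      \<longrightarrow> \<bar>KLdiv P m a b - KLdiv P m a' b'\<bar> < e" by metis
    define d where "d = Min (range dm)"
    have d0: "d > 0" unfolding d_def by (subst Min_gr_iff) (auto intro: dm)
    have dle: "\<And>m. d \<le> dm m" unfolding d_def by (rule Min_le) auto
    show ?thesis
      by (intro exI[of _ d] conjI d0 allI impI, rule dmP[rule_format]) (use dle in \<open>auto intro: less_le_trans\<close>)
  qed

  have goal: "continuous_on S (\<lambda>(w, \<theta>). psi P tb K \<Theta> w \<theta>)"
  proof (cases "\<forall>\<theta>\<in>T. A \<theta> = {}")
    case True
    have "continuous_on S (\<lambda>_. (\<top>::ereal))" by (rule continuous_on_const)
    then show ?thesis by (rule continuous_on_eq) (use True in \<open>auto simp: S_def psi_eq\<close>)
  next
    case False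
    then obtain \<theta>1 lam1 where t1: "\<theta>1 \<in> T" and l1: "lam1 \<in> A \<theta>1" by blast
    have ne: "A \<theta> \<noteq> {}" if t: "\<theta>\<in>T" for \<theta>
    proof (cases "label_equiv K (ci \<theta>) (ci \<theta>1)")
      case True then show ?thesis using same l1 by auto
    next
      case False then show ?thesis using diff[OF t t1] by auto
    qed
    define F where "F = (\<lambda>x::('m\<Rightarrow>real)\<times>('m\<Rightarrow>'a). Inf (f (fst x) (snd x) ` A (snd x)))"
    have bdd: "bdd_below (f w \<theta> ` A \<theta>)" if "w\<in>prob_simplex" "\<theta>\<in>T" for w \<theta>
      by (rule bdd_belowI2[where m=0]) (use fnn that AT in auto)
    have psiF: "ereal (F x) = (\<lambda>(w,\<theta>). psi P tb K \<Theta> w \<theta>) x" if "x \<in> S" for x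
    proof -
      obtain w \<theta> where x: "x = (w,\<theta>)" "w\<in>prob_simplex" "\<theta>\<in>T" using \<open>x\<in>S\<close> by (auto simp: S_def)
      have "ereal (Inf (f w \<theta> ` A \<theta>)) = (INF a\<in>f w \<theta> ` A \<theta>. ereal a)"
        using ne[OF x(3)] bdd[OF x(2,3)] by (intro ereal_Inf') auto
      then show ?thesis by (simp add: x F_def psi_eq image_comp)
    qed
    have Fnn: "0 \<le> F (w,\<theta>)" if "w\<in>prob_simplex" "\<theta>\<in>T" for w \<theta>
      unfolding F_def fst_conv snd_conv
      by (rule cINF_greatest[OF ne[OF that(2)]]) (use fnn that AT in auto)
    have Fle: "F (w,\<theta>) \<le> f w \<theta> lam" if "w\<in>prob_simplex" "\<theta>\<in>T" "lam \<in> A \<theta>" for w \<theta> lam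
      unfolding F_def fst_conv snd_conv by (rule cINF_lower[OF bdd[OF that(1,2)] that(3)])
    have key: "\<exists>d>0. \<forall>w \<theta>. w\<in>prob_simplex \<longrightarrow> \<theta>\<in>T \<longrightarrow> (\<forall>m. \<bar>w m - w0 m\<bar> < d \<and> dist (\<theta> m) (\<theta>0 m) < d)
        \<longrightarrow> \<bar>F (w,\<theta>) - F (w0,\<theta>0)\<bar> < e"
      if w0: "w0\<in>prob_simplex" and t0: "\<theta>0\<in>T" and e: "0<e" for w0 \<theta>0 e
    proof -
      define \<eta> where "\<eta> = e/4"
      have \<eta>: "0 < \<eta>" using e by (simp add: \<eta>_def)
      obtain d1 where d1: "d1>0" and d1P: "\<And>m a a' b b'. a\<in>\<Theta> \<Longrightarrow> a'\<in>\<Theta> \<Longrightarrow> b\<in>\<Theta> \<Longrightarrow> b'\<in>\<Theta> \<Longrightarrow>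
          dist a a' < d1 \<Longrightarrow> dist b b' < d1 \<Longrightarrow> \<bar>KLdiv P m a b - KLdiv P m a' b'\<bar> < \<eta>"
        using uc[OF \<eta>] by blast
      define n where "n = real CARD('m)"
      have n: "0 < n" by (simp add: n_def)
      define d where "d = min d1 (\<eta> / (n * (B+1)))"
      have d: "0 < d" using d1 \<eta> n B0 by (simp add: d_def)
      have dd1: "d \<le> d1" by (simp add: d_def)
      have dB: "n * d * B \<le> \<eta>"
      proof -
        have "d \<le> \<eta> / (n*(B+1))" by (simp add: d_def)
        then have "d * (n*(B+1)) \<le> \<eta>" using n B0 by (simp add: pos_le_divide_eq)
        moreover have "n*d*B \<le> d * (n*(B+1))" using n d by (simp add: algebra_simps)
        ultimately show ?thesis by linarith
      qed
      have t0m: "\<And>m. \<theta>0 m \<in> \<Theta>" using t0 by (simp add: T_def)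
      show ?thesis
      proof (intro exI[of _ d] conjI allI impI d)
        fix w \<theta> assume w: "w\<in>prob_simplex" and t: "\<theta>\<in>T"
          and close: "\<forall>m. \<bar>w m - w0 m\<bar> < d \<and> dist (\<theta> m) (\<theta>0 m) < d"
        have tm: "\<And>m. \<theta> m \<in> \<Theta>" using t by (simp add: T_def)
        have cl1: "\<And>m. \<bar>w m - w0 m\<bar> < d" using close by blast
        have cl2: "\<And>m. dist (\<theta> m) (\<theta>0 m) < d1" using close dd1 by (meson less_le_trans)
        show "\<bar>F (w,\<theta>) - F (w0,\<theta>0)\<bar> < e"
        proof (cases "label_equiv K (ci \<theta>) (ci \<theta>0)")
          case True
          then have AA: "A \<theta> = A \<theta>0" by (rule same)
          have "\<bar>F (w,\<theta>) - F (w0,\<theta>0)\<bar> \<le> 2*\<eta>"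
            unfolding F_def fst_conv snd_conv AA
          proof (rule Inf_close)
            show "A \<theta>0 \<noteq> {}" using ne t0 by blast
            fix lam assume lam: "lam \<in> A \<theta>0"
            then have lT: "lam \<in> T" by (rule AT)
            then have lm: "\<And>m. lam m \<in> \<Theta>" by (simp add: T_def)
            show "0 \<le> f w \<theta> lam" using fnn w t lT by blast
            show "0 \<le> f w0 \<theta>0 lam" using fnn w0 t0 lT by blast
            have "f w \<theta> lam - f w0 \<theta>0 lam = (\<Sum>m\<in>UNIV. (w m - w0 m) * KLdiv P m (\<theta> m) (lam m)
                 + w0 m * (KLdiv P m (\<theta> m) (lam m) - KLdiv P m (\<theta>0 m) (lam m)))"
              unfolding f_def sum_subtractf[symmetric] by (rule sum.cong) (auto simp: algebra_simps)
            also have "\<bar>\<dots>\<bar> \<le> (\<Sum>m\<in>UNIV. d * B + w0 m * \<eta>)"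
            proof (rule order_trans[OF sum_abs], rule sum_mono)
              fix m
              have a1: "\<bar>(w m - w0 m) * KLdiv P m (\<theta> m) (lam m)\<bar> \<le> d * B"
                unfolding abs_mult using cl1[of m] B[OF tm lm, of m]
                by (intro mult_mono) auto
              have a2: "\<bar>w0 m * (KLdiv P m (\<theta> m) (lam m) - KLdiv P m (\<theta>0 m) (lam m))\<bar> \<le> w0 m * \<eta>"
                unfolding abs_mult using wnn[OF w0, of m] d1P[of "\<theta> m" "\<theta>0 m" "lam m" "lam m" m] tm t0m lm cl2 d1
                by (intro mult_mono) auto
              show "\<bar>(w m - w0 m) * KLdiv P m (\<theta> m) (lam m) + w0 m * (KLdiv P m (\<theta> m) (lam m) - KLdiv P m (\<theta>0 m) (lam m))\<bar>
                  \<le> d * B + w0 m * \<eta>"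
                using a1 a2 abs_triangle_ineq order_trans by fastforce
            qed
            also have "\<dots> = n * d * B + \<eta>"
              using wsum[OF w0] by (simp add: sum.distrib sum_distrib_right[symmetric] n_def)
            also have "\<dots> \<le> 2 * \<eta>" using dB by simp
            finally show "\<bar>f w \<theta> lam - f w0 \<theta>0 lam\<bar> \<le> 2 * \<eta>" .
          qed
          then show ?thesis using \<eta>_def e by simp
        next
          case False
          from diff[OF t t0 False] have in1: "\<theta> \<in> A \<theta>0" and in2: "\<theta>0 \<in> A \<theta>" by auto
          have f1: "f w \<theta> \<theta>0 \<le> \<eta>"
          proof -
            have "f w \<theta> \<theta>0 \<le> (\<Sum>m\<in>UNIV. w m * \<eta>)" unfolding f_def
            proof (rule sum_mono, rule mult_left_mono)
              fix m
              have "\<bar>KLdiv P m (\<theta> m) (\<theta>0 m) - KLdiv P m (\<theta>0 m) (\<theta>0 m)\<bar> < \<eta>"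
                using d1P[of "\<theta> m" "\<theta>0 m" "\<theta>0 m" "\<theta>0 m" m] tm t0m cl2 d1 by simp
              then show "KLdiv P m (\<theta> m) (\<theta>0 m) \<le> \<eta>" using KL0[OF t0m] by simp
              show "0 \<le> w m" using wnn[OF w] .
            qed
            also have "\<dots> = \<eta>" using wsum[OF w] by (simp add: sum_distrib_right[symmetric])
            finally show ?thesis .
          qed
          have f2: "f w0 \<theta>0 \<theta> \<le> \<eta>"
          proof -
            have "f w0 \<theta>0 \<theta> \<le> (\<Sum>m\<in>UNIV. w0 m * \<eta>)" unfolding f_def
            proof (rule sum_mono, rule mult_left_mono)
              fix m
              have "dist (\<theta>0 m) (\<theta>0 m) < d1" using d1 by simp
              then have "\<bar>KLdiv P m (\<theta>0 m) (\<theta> m) - KLdiv P m (\<theta>0 m) (\<theta>0 m)\<bar> < \<eta>"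
                using d1P[of "\<theta>0 m" "\<theta>0 m" "\<theta> m" "\<theta>0 m" m] tm t0m cl2 d1 by simp
              then show "KLdiv P m (\<theta>0 m) (\<theta> m) \<le> \<eta>" using KL0[OF t0m] by simp
              show "0 \<le> w0 m" using wnn[OF w0] .
            qed
            also have "\<dots> = \<eta>" using wsum[OF w0] by (simp add: sum_distrib_right[symmetric])
            finally show ?thesis .
          qed
          have "F (w,\<theta>) \<le> \<eta>" using Fle[OF w t in2] f1 by linarith
          moreover have "F (w0,\<theta>0) \<le> \<eta>" using Fle[OF w0 t0 in1] f2 by linarith
          moreover have "0 \<le> F (w,\<theta>)" "0 \<le> F (w0,\<theta>0)" using Fnn w t w0 t0 by auto
          ultimately show ?thesis using \<eta>_def e by auto
        qed
      qed
    qed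
    have "continuous_on S F"
      unfolding continuous_on_topological
    proof (intro ballI allI impI)
      fix x0 U assume x0: "x0\<in>S" and U: "open U" "F x0 \<in> U"
      obtain e where e: "e>0" "ball (F x0) e \<subseteq> U" using open_contains_ball U by blast
      obtain w0 \<theta>0 where x0': "x0 = (w0,\<theta>0)" "w0\<in>prob_simplex" "\<theta>0\<in>T" using x0 by (auto simp: S_def)
      obtain d where d: "d>0" and dP: "\<And>w \<theta>. w\<in>prob_simplex \<Longrightarrow> \<theta>\<in>T \<Longrightarrow>
          (\<forall>m. \<bar>w m - w0 m\<bar> < d \<and> dist (\<theta> m) (\<theta>0 m) < d) \<Longrightarrow> \<bar>F (w,\<theta>) - F (w0,\<theta>0)\<bar> < e"
        using key[OF x0'(2,3) e(1)] by blast
      show "\<exists>A. open A \<and> x0 \<in> A \<and> (\<forall>y\<in>S. y \<in> A \<longrightarrow> F y \<in> U)"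
      proof (intro exI[of _ "{x. \<forall>m. \<bar>fst x m - w0 m\<bar> < d \<and> dist (snd x m) (\<theta>0 m) < d}"] conjI ballI impI)
        show "open {x. \<forall>m. \<bar>fst x m - w0 m\<bar> < d \<and> dist (snd x m) (\<theta>0 m) < d}" by (rule open_box)
        show "x0 \<in> {x. \<forall>m. \<bar>fst x m - w0 m\<bar> < d \<and> dist (snd x m) (\<theta>0 m) < d}" using d x0' by simp
        fix y assume yS: "y\<in>S" and yA: "y \<in> {x. \<forall>m. \<bar>fst x m - w0 m\<bar> < d \<and> dist (snd x m) (\<theta>0 m) < d}"
        obtain w \<theta> where y: "y=(w,\<theta>)" "w\<in>prob_simplex" "\<theta>\<in>T" using yS by (auto simp: S_def)
        have "\<bar>F y - F x0\<bar> < e" using dP[OF y(2,3)] yA by (simp add: y x0')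
        then have "F y \<in> ball (F x0) e" by (simp add: dist_real_def abs_minus_commute)
        then show "F y \<in> U" using e(2) by blast
      qed
    qed
    then have "continuous_on S (\<lambda>x. ereal (F x))" by (rule continuous_on_ereal)
    then show "continuous_on S (\<lambda>(w,\<theta>). psi P tb K \<Theta> w \<theta>)" by (rule continuous_on_eq) (rule psiF)
  qed
  then show ?thesis by (simp add: S_def T_def)
qed

end
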